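(* Assume (in $V$) $\mathfrak b=\aleph_1$ with the family $\{g_\alpha:\alpha<\omega_1\}$ fixed as below. Let $X\subseteq{}^\omega 2$, $X\in V$, with $|X|\ge\aleph_1$, let $G=\langle X\rangle$ be the subgroup generated by $X$, and let $\bar{\mathcal T}\in V$ be a $G$-matrix with $\mathcal T=\bigcup_\alpha\mathcal T_\alpha$. Let $\dot z$ be a Cohen-forcing ($\mathbb C$-)name such that the trivial condition forces $\dot z\in{}^\omega 2\setminus V$. Then there is $x\in X$ such that the trivial condition forces $\dot z\notin x+[T]$ for all $T\in\mathcal T$.
   Context: ${}^\omega 2$ is the Cantor space with bitwise addition modulo $2$. $\mathbb S$ is the set of perfect subtrees of ${}^{<\omega}2$ ordered by inclusion; $[T]$ is the set of branches of $T$ (evaluated in the extension); for $x\in{}^\omega 2$, $x+T=\{\sigma+x\restriction|\sigma|:\sigma\in T\}$. A node $\sigma\in T$ is splitting if $\sigma^\frown0,\sigma^\frown1\in T$; $T$ is skew if for each $n$ there is at most one splitting node of length $n$. The splitting predecessors of $s\in T$ are the splitting nodes of $T$ properly contained in $s$; $h_T(n)=\min\{k:\text{some node of }T\text{ of length }k\text{ has }n\text{ splitting predecessors}\}$. $g\le^* f$ means $g(n)\le f(n)$ for almost all $n$. $\{g_\alpha:\alpha<\omega_1\}\subseteq{}^\omega\omega$ satisfies $\alpha<\beta\Rightarrow g_\alpha\le^* g_\beta$ and for every $f\in{}^\omega\omega$ there is $\alpha$ with $g_\alpha\not\le^* f$. $S$ is somewhere dense in $T$ if there is $s\in T$ with $T_s=\{t\in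 T:t\subseteq s\lor s\subseteq t\}\subseteq S$. A $G$-matrix is a sequence $\langle\mathcal T_\alpha:\alpha<\omega_1\rangle$ with $\mathcal T=\bigcup_\alpha\mathcal T_\alpha$ such that: (i) $\mathcal T\subseteq\mathbb S$ consists of skew trees; (ii) $g_\alpha\le^* h_T$ for all $T\in\mathcal T_\alpha$; (iii) for all $S\neq T$ in $\mathcal T_\alpha$ and all $x\in G$, $x+S$ and $T$ are incompatible; (iv) for every $T\in\mathbb S$ the set $\{(x,S)\in G\times\mathcal T: x+S\text{ is somewhere dense in }T\}$ is at most countable. *)

theory Defs
  imports Main "HOL-Library.Countable_Set" "HOL-Library.Sublist"
begin

type_synonym cantor = "nat \<Rightarrow> bool"
type_synonym seq = "bool list"

definition cadd :: "cantor \<Rightarrow> cantor \<Rightarrow> cantor" where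
  "cadd x y = (\<lambda>n. x n \<noteq> y n)"

definition czero :: cantor where "czero = (\<lambda>n. False)"

definition restr :: "cantor \<Rightarrow> nat \<Rightarrow> seq" where
  "restr x n = map x [0..<n]"

definition is_tree :: "seq set \<Rightarrow> bool" where
  "is_tree T \<longleftrightarrow> T \<noteq> {} \<and> (\<forall>\<sigma>\<in>T. \<forall>\<tau>. prefix \<tau> \<sigma> \<longrightarrow> \<tau> \<in> T)"

definition splitting :: "seq set \<Rightarrow> seq \<Rightarrow> bool" where
  "splitting T \<sigma> \<longleftrightarrow> \<sigma> \<in> T \<and> \<sigma> @ [False] \<in> T \<and> \<sigma> @ [True] \<in> T"

definition perfect_tree :: "seq set \<Rightarrow> bool" where
  "perfect_tree T \<longleftrightarrow> is_tree T \<and> (\<forall>\<sigma>\<in>T. \<exists>\<tau>. prefix \<sigma> \<tau> \<and> splitting T \<tau>)"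

definition branches :: "seq set \<Rightarrow> cantor set" where
  "branches T = {x. \<forall>n. restr x n \<in> T}"

definition shift :: "cantor \<Rightarrow> seq set \<Rightarrow> seq set" where
  "shift x T = (\<lambda>\<sigma>. map2 (\<noteq>) \<sigma> (restr x (length \<sigma>))) ` T"

definition skew :: "seq set \<Rightarrow> bool" where
  "skew T \<longleftrightarrow> (\<forall>\<sigma> \<tau>. splitting T \<sigma> \<and> splitting T \<tau> \<and> length \<sigma> = length \<tau> \<longrightarrow> \<sigma> = \<tau>)"

definition split_preds :: "seq set \<Rightarrow> seq \<Rightarrow> seq set" where
  "split_preds T s = {\<sigma>. splitting T \<sigma> \<and> strict_prefix \<sigma> s}"

definition hT :: "seq set \<Rightarrow> nat \<Rightarrow> nat" where
  "hT T n = (LEAST k. \<exists>s\<in>T. length s = k \<and> card (split_preds T s) = n)"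

definition compatible :: "seq set \<Rightarrow> seq set \<Rightarrow> bool" where
  "compatible S T \<longleftrightarrow> (\<exists>R. perfect_tree R \<and> R \<subseteq> S \<and> R \<subseteq> T)"

definition somewhere_dense :: "seq set \<Rightarrow> seq set \<Rightarrow> bool" where
  "somewhere_dense S T \<longleftrightarrow> (\<exists>s\<in>T. {t\<in>T. prefix t s \<or> prefix s t} \<subseteq> S)"

definition ae_le :: "(nat \<Rightarrow> nat) \<Rightarrow> (nat \<Rightarrow> nat) \<Rightarrow> bool" where
  "ae_le g f \<longleftrightarrow> (\<forall>\<^sub>F n in sequentially. g n \<le> f n)"

definition omega1_type :: "'i::wellorder itself \<Rightarrow> bool" where
  "omega1_type _ \<longleftrightarrow> \<not> countable (UNIV :: 'i set) \<and> (\<forall>a::'i. countable {b. b < a})"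

(* the fixed witness family for b = aleph_1 *)
definition b_family :: "('i::wellorder \<Rightarrow> nat \<Rightarrow> nat) \<Rightarrow> bool" where
  "b_family g \<longleftrightarrow> (\<forall>\<alpha> \<beta>. \<alpha> < \<beta> \<longrightarrow> ae_le (g \<alpha>) (g \<beta>)) \<and> (\<forall>f. \<exists>\<alpha>. \<not> ae_le (g \<alpha>) f)"

inductive_set gen_group :: "cantor set \<Rightarrow> cantor set" for X where
  zero: "czero \<in> gen_group X"
| step: "x \<in> X \<Longrightarrow> y \<in> gen_group X \<Longrightarrow> cadd x y \<in> gen_group X"

definition G_matrix :: "('i \<Rightarrow> nat \<Rightarrow> nat) \<Rightarrow> cantor set \<Rightarrow> ('i \<Rightarrow> seq set set) \<Rightarrow> bool" where
  "G_matrix g G Tm \<longleftrightarrow>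
     (\<forall>T\<in>\<Union>(range Tm). perfect_tree T \<and> skew T) \<and>
     (\<forall>\<alpha>. \<forall>T\<in>Tm \<alpha>. ae_le (g \<alpha>) (hT T)) \<and>
     (\<forall>\<alpha>. \<forall>S\<in>Tm \<alpha>. \<forall>T\<in>Tm \<alpha>. S \<noteq> T \<longrightarrow> (\<forall>x\<in>G. \<not> compatible (shift x S) T)) \<and>
     (\<forall>T. perfect_tree T \<longrightarrow>
        countable {(x, S). x \<in> G \<and> S \<in> \<Union>(range Tm) \<and> somewhere_dense (shift x S) T})"

(* Cohen forcing C: conditions are finite binary sequences, q <= p iff q extends p *)
definition cext :: "seq \<Rightarrow> seq \<Rightarrow> bool" where
  "cext q p \<longleftrightarrow> prefix p q"

(* A C-name for a subset of omega x 2 is a set of pairs (condition, (n,b)),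
   i.e. the name {((n,b)check, p) | (p,(n,b)) in N}.
   p forces "(n,b) in N", i.e. "z(n) = b": *)
definition forces_bit :: "(seq \<times> (nat \<times> bool)) set \<Rightarrow> seq \<Rightarrow> nat \<Rightarrow> bool \<Rightarrow> bool" where
  "forces_bit N p n b \<longleftrightarrow>
     (\<forall>q. cext q p \<longrightarrow> (\<exists>r p'. cext r q \<and> (p', (n, b)) \<in> N \<and> cext r p'))"

(* trivial condition forces "N is an element of 2^omega" *)
definition name_real :: "(seq \<times> (nat \<times> bool)) set \<Rightarrow> bool" where
  "name_real N \<longleftrightarrow>
     (\<forall>n p. \<exists>q b. cext q p \<and> forces_bit N q n b) \<and>
     (\<forall>n p. \<not> (forces_bit N p n True \<and> forces_bit N p n False))"

(* trivial condition forces "N is not in V", i.e. N differs from every ground real *)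
definition forces_new :: "(seq \<times> (nat \<times> bool)) set \<Rightarrow> bool" where
  "forces_new N \<longleftrightarrow>
     (\<forall>y::cantor. \<forall>p. \<exists>q n. cext q p \<and> forces_bit N q n (\<not> y n))"

(* trivial condition forces "N \<notin> [A]" for a ground tree A ([A] evaluated in the extension) *)
definition forces_notin_branches :: "(seq \<times> (nat \<times> bool)) set \<Rightarrow> seq set \<Rightarrow> bool" where
  "forces_notin_branches N A \<longleftrightarrow>
     (\<forall>p. \<exists>q \<sigma>. cext q p \<and> \<sigma> \<notin> A \<and> (\<forall>i<length \<sigma>. forces_bit N q i (\<sigma> ! i)))"

end

theory Submission imports Defs begin

definition fseq :: "(seq \<times> (nat \<times> bool)) set \<Rightarrow> seq \<Rightarrow> seq \<Rightarrow> bool" where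
  "fseq N q \<sigma> \<longleftrightarrow> (\<forall>i<length \<sigma>. forces_bit N q i (\<sigma>!i))"

definition Tp :: "(seq \<times> (nat \<times> bool)) set \<Rightarrow> seq \<Rightarrow> seq set" where
  "Tp N p = {\<sigma>. \<exists>q. cext q p \<and> fseq N q \<sigma>}"

lemma cext_trans: "cext a b \<Longrightarrow> cext b c \<Longrightarrow> cext a c"
  unfolding cext_def by (meson prefix_order.trans)

lemma cext_refl: "cext a a" unfolding cext_def by simp

lemma fb_mono: "forces_bit N q n b \<Longrightarrow> cext r q \<Longrightarrow> forces_bit N r n b"
  unfolding forces_bit_def by (meson cext_trans)

lemma fseq_mono: "fseq N q s \<Longrightarrow> cext r q \<Longrightarrow> fseq N r s"
  unfolding fseq_def using fb_mono by blast

lemma fb_cons: "name_real N \<Longrightarrow> forces_bit N q n b \<Longrightarrow> forces_bit N q n b' \<Longrightarrow> b = b'"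
  unfolding name_real_def by (cases b; cases b'; auto)

lemma ext1:
  assumes "name_real N" "fseq N q s"
  shows "\<exists>r b. cext r q \<and> fseq N r (s @ [b])"
proof -
  obtain r b where r: "cext r q" "forces_bit N r (length s) b"
    using assms(1) unfolding name_real_def by blast
  have "fseq N r s" using fseq_mono[OF assms(2) r(1)] .
  then have "fseq N r (s @ [b])" using r(2) unfolding fseq_def
    by (auto simp: nth_append less_Suc_eq)
  with r show ?thesis by blast
qed

lemma extk:
  assumes "name_real N" "fseq N q s"
  shows "\<exists>r t. cext r q \<and> prefix s t \<and> length t = length s + k \<and> fseq N r t"
proof (induction k)
  case 0
  then show ?case using assms(2) cext_refl by fastforce
next
  case (Suc k)
  then obtain r t where rt: "cext r q" "prefix s t" "length t = length s + k" "fseq N r t" by blast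
  obtain r' b where "cext r' r" "fseq N r' (t @ [b])" using ext1[OF assms(1) rt(4)] by blast
  then show ?case using rt
    by (intro exI[of _ r'] exI[of _ "t@[b]"]) (auto intro: cext_trans prefix_order.trans)
qed

lemma pfx_eq: "prefix a b \<Longrightarrow> length a = length b \<Longrightarrow> a = b"
  by (auto simp: prefix_def)

lemma pfx_butlast: "prefix (butlast t) t"
  by (metis append_butlast_last_id butlast.simps(1) prefix_order.eq_refl prefixI)

lemma pfx_butlastI: "prefix s t \<Longrightarrow> length s < length t \<Longrightarrow> prefix s (butlast t)"
  by (auto simp: prefix_def butlast_append)

lemma pfx_nth: "prefix t s \<Longrightarrow> i < length t \<Longrightarrow> t!i = s!i"
  by (auto simp: prefix_def nth_append)

lemma Tp_nil: "[] \<in> Tp N p"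
  unfolding Tp_def fseq_def using cext_refl by auto

lemma Tp_tree: "is_tree (Tp N p)"
  unfolding is_tree_def
proof safe
  show False if "Tp N p = {}" using that Tp_nil by auto
next
  fix s t assume "s \<in> Tp N p" "prefix t s"
  then obtain q where "cext q p" "fseq N q s" "prefix t s" unfolding Tp_def by blast
  show "t \<in> Tp N p" unfolding Tp_def mem_Collect_eq fseq_def
  proof (intro exI[of _ q] conjI allI impI)
    fix i assume "i < length t"
    then have "t!i = s!i" "i < length s"
      using pfx_nth[OF \<open>prefix t s\<close>] prefix_length_le[OF \<open>prefix t s\<close>] by auto
    then show "forces_bit N q i (t!i)" using \<open>fseq N q s\<close> unfolding fseq_def by simp
  qed (rule \<open>cext q p\<close>)
qed

lemma chain:
  assumes nos: "\<forall>\<tau>. prefix \<sigma> \<tau> \<longrightarrow> \<not> splitting T \<tau>" and tr: "is_tree T"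
  shows "\<forall>t1 t2. t1 \<in> T \<longrightarrow> t2 \<in> T \<longrightarrow> prefix \<sigma> t1 \<longrightarrow> prefix \<sigma> t2 \<longrightarrow>
     length t1 = length \<sigma> + k \<longrightarrow> length t2 = length \<sigma> + k \<longrightarrow> t1 = t2"
proof (induction k)
  case 0
  then show ?case by (metis add.right_neutral pfx_eq)
next
  case (Suc k)
  show ?case
  proof (intro allI impI)
    fix t1 t2 assume h: "t1 \<in> T" "t2 \<in> T" "prefix \<sigma> t1" "prefix \<sigma> t2"
      "length t1 = length \<sigma> + Suc k" "length t2 = length \<sigma> + Suc k"
    have ne: "t1 \<noteq> []" "t2 \<noteq> []" using h by auto
    have e1: "t1 = butlast t1 @ [last t1]" "t2 = butlast t2 @ [last t2]" using ne by auto
    have pb: "prefix (butlast t1) t1" "prefix (butlast t2) t2"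
      by (simp_all add: pfx_butlast)
    have bT: "butlast t1 \<in> T" "butlast t2 \<in> T" using tr h pb unfolding is_tree_def by blast+
    have ps: "prefix \<sigma> (butlast t1)" "prefix \<sigma> (butlast t2)"
      using h by (auto intro!: pfx_butlastI)
    have "butlast t1 = butlast t2" using Suc bT ps h by auto
    moreover have "\<not> splitting T (butlast t1)" using nos ps by blast
    ultimately have "last t1 = last t2" using bT h e1 unfolding splitting_def
      by (metis (full_types))
    then show "t1 = t2" using e1 \<open>butlast t1 = butlast t2\<close> by (simp only:)
  qed
qed

lemma Tp_perfect:
  assumes nr: "name_real N" and fn: "forces_new N"
  shows "perfect_tree (Tp N p)"
  unfolding perfect_tree_def
proof (intro conjI ballI Tp_tree)
  fix \<sigma> assume "\<sigma> \<in> Tp N p"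
  then obtain q where q: "cext q p" "fseq N q \<sigma>" unfolding Tp_def by blast
  show "\<exists>\<tau>. prefix \<sigma> \<tau> \<and> splitting (Tp N p) \<tau>"
  proof (rule ccontr)
    assume "\<not> ?thesis"
    then have nos: "\<forall>\<tau>. prefix \<sigma> \<tau> \<longrightarrow> \<not> splitting (Tp N p) \<tau>" by blast
    define y where "y = (\<lambda>n. \<exists>q'. cext q' q \<and> forces_bit N q' n True)"
    obtain q2 n where q2: "cext q2 q" "forces_bit N q2 n (\<not> y n)"
      using fn unfolding forces_new_def by blast
    have yn: "y n"
    proof (rule ccontr)
      assume "\<not> y n"
      then show False using q2 unfolding y_def by auto
    qed
    then obtain q1 where q1: "cext q1 q" "forces_bit N q1 n True" unfolding y_def by blast
    have f2: "forces_bit N q2 n False" using q2 yn by simp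
    have s1: "fseq N q1 \<sigma>" "fseq N q2 \<sigma>" using q q1 q2 fseq_mono by blast+
    show False
    proof (cases "n < length \<sigma>")
      case True
      then have "forces_bit N q1 n (\<sigma>!n)" "forces_bit N q2 n (\<sigma>!n)"
        using s1 unfolding fseq_def by auto
      then show False using fb_cons[OF nr] q1(2) f2 by metis
    next
      case False
      define k where "k = Suc n - length \<sigma>"
      obtain r1 t1 where r1: "cext r1 q1" "prefix \<sigma> t1" "length t1 = length \<sigma> + k" "fseq N r1 t1"
        using extk[OF nr s1(1)] by blast
      obtain r2 t2 where r2: "cext r2 q2" "prefix \<sigma> t2" "length t2 = length \<sigma> + k" "fseq N r2 t2"
        using extk[OF nr s1(2)] by blast
      have "cext r1 p" using r1(1) q1(1) q(1) cext_trans by blast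
      then have t1: "t1 \<in> Tp N p" using r1 unfolding Tp_def by blast
      have "cext r2 p" using r2(1) q2(1) q(1) cext_trans by blast
      then have t2: "t2 \<in> Tp N p" using r2 unfolding Tp_def by blast
      have "t1 = t2" using chain[OF nos Tp_tree, of k] t1 t2 r1 r2 by blast
      have nl: "n < length t1" "n < length t2" using False r1(3) r2(3) k_def by auto
      have "forces_bit N r1 n (t1!n)" "forces_bit N r1 n True"
        using r1(4) nl fb_mono[OF q1(2) r1(1)] unfolding fseq_def by auto
      then have "t1!n = True" using fb_cons[OF nr] by metis
      moreover have "forces_bit N r2 n (t2!n)" "forces_bit N r2 n False"
        using r2(4) nl fb_mono[OF f2 r2(1)] unfolding fseq_def by auto
      then have "t2!n = False" using fb_cons[OF nr] by metis
      ultimately show False using \<open>t1 = t2\<close> by simp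
    qed
  qed
qed

theorem lemma4p4:
  fixes g :: "'i::wellorder \<Rightarrow> nat \<Rightarrow> nat"
    and X :: "cantor set"
    and Tm :: "'i \<Rightarrow> seq set set"
    and N :: "(seq \<times> (nat \<times> bool)) set"
  assumes "omega1_type TYPE('i)"
    and "b_family g"
    and "\<not> countable X"
    and "G_matrix g (gen_group X) Tm"
    and "name_real N"
    and "forces_new N"
  shows "\<exists>x\<in>X. \<forall>T\<in>\<Union>(range Tm). forces_notin_branches N (shift x T)"
proof -
  have XG: "X \<subseteq> gen_group X"
  proof
    fix x assume "x \<in> X"
    then have "cadd x czero \<in> gen_group X" by (intro gen_group.step gen_group.zero)
    moreover have "cadd x czero = x" unfolding cadd_def czero_def by simp
    ultimately show "x \<in> gen_group X" by simp
  qed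
  define C where "C p = {(x, S). x \<in> gen_group X \<and> S \<in> \<Union>(range Tm) \<and>
      somewhere_dense (shift x S) (Tp N p)}" for p
  have cC: "countable (C p)" for p
    using assms(4) Tp_perfect[OF assms(5,6), of p] unfolding G_matrix_def C_def by blast
  have "countable (\<Union>p. C p)" by (intro countable_UN[of UNIV] cC) simp
  then have "countable (fst ` (\<Union>p. C p))" by simp
  then obtain x where x: "x \<in> X" "x \<notin> fst ` (\<Union>p. C p)"
    using assms(3) by (metis countable_subset subsetI)
  have "forces_notin_branches N (shift x T)" if T: "T \<in> \<Union>(range Tm)" for T
  proof (rule ccontr)
    assume "\<not> forces_notin_branches N (shift x T)"
    then obtain p where p: "\<forall>q \<sigma>. cext q p \<and> \<sigma> \<notin> shift x T \<longrightarrow>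
        \<not> (\<forall>i<length \<sigma>. forces_bit N q i (\<sigma> ! i))"
      unfolding forces_notin_branches_def by blast
    have sub: "Tp N p \<subseteq> shift x T" using p unfolding Tp_def fseq_def by blast
    have "somewhere_dense (shift x T) (Tp N p)"
      unfolding somewhere_dense_def using Tp_nil sub by blast
    then have "(x, T) \<in> C p" using XG x(1) T unfolding C_def by blast
    then show False using x(2) by force
  qed
  then show ?thesis using x(1) by blast
qed

end
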